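(* For $n\ge 0$ let $K_n$ be the complete graph on $n$ vertices ($K_0$ empty). Then $$\sum_{n\ge 0}\mathrm{sa}(K_n;t)\,\frac{x^n}{n!} = e^{tx}\,\operatorname{sech} x.$$
   Context: All graphs are finite, simple and undirected. For a graph $G=(V,E)$ and $V'\subseteq V$, $G|_{V'}$ denotes the induced subgraph on $V'$. The signed a-number $\mathrm{sa}(G)$ is defined recursively: $\mathrm{sa}(G)=1$ if $G$ is the empty graph (no vertices); $\mathrm{sa}(G)=0$ if $G$ has a connected component with an odd number of vertices; otherwise $\mathrm{sa}(G)=-\sum_{V'\subsetneq V}\mathrm{sa}(G|_{V'})$. The signed a-polynomial of $G$ is $\mathrm{sa}(G;t)=\sum_{V'\subseteq V}\mathrm{sa}(G|_{V'})\,t^{|V\setminus V'|}$. *)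

theory Defs
  imports Complex_Main "HOL-Computational_Algebra.Formal_Power_Series"
begin

(* A finite simple graph is given by a finite vertex set V and a symmetric,
   irreflexive edge relation E.  The induced subgraph on V' \<subseteq> V is (V', E)
   (edges are only ever used between vertices of the current vertex set). *)

definition reach :: "('a \<Rightarrow> 'a \<Rightarrow> bool) \<Rightarrow> 'a set \<Rightarrow> 'a \<Rightarrow> 'a \<Rightarrow> bool" where
  "reach E V = (\<lambda>x y. x \<in> V \<and> y \<in> V \<and> E x y)\<^sup>*\<^sup>*"

definition component :: "('a \<Rightarrow> 'a \<Rightarrow> bool) \<Rightarrow> 'a set \<Rightarrow> 'a \<Rightarrow> 'a set" where
  "component E V v = {u \<in> V. reach E V v u}"

definition has_odd_component :: "('a \<Rightarrow> 'a \<Rightarrow> bool) \<Rightarrow> 'a set \<Rightarrow> bool" where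
  "has_odd_component E V \<longleftrightarrow> (\<exists>v\<in>V. odd (card (component E V v)))"

function sa :: "('a \<Rightarrow> 'a \<Rightarrow> bool) \<Rightarrow> 'a set \<Rightarrow> int" where
  "sa E V = (if infinite V then 0
             else if V = {} then 1
             else if has_odd_component E V then 0
             else - (\<Sum>V'\<in>{V'. V' \<subset> V}. sa E V'))"
  by auto
termination
  by (relation "measure (\<lambda>(E, V). card V)")
     (auto simp: psubset_card_mono)

definition sa_poly :: "('a \<Rightarrow> 'a \<Rightarrow> bool) \<Rightarrow> 'a set \<Rightarrow> real \<Rightarrow> real" where
  "sa_poly E V t = (\<Sum>V'\<in>Pow V. of_int (sa E V') * t ^ card (V - V'))"

(* complete graph K_n on vertex set {0..<n} *)
definition K_edges :: "nat \<Rightarrow> nat \<Rightarrow> bool" where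
  "K_edges x y \<longleftrightarrow> x \<noteq> y"

definition fps_cosh :: "real fps" where
  "fps_cosh = (fps_exp 1 + fps_exp (-1)) / 2"

definition fps_sech :: "real fps" where
  "fps_sech = inverse fps_cosh"

end

theory Submission imports Defs begin

fun a :: "nat \<Rightarrow> int" where
 "a n = (if n = 0 then 1 else if odd n then 0 else - (\<Sum>k<n. int (n choose k) * a k))"
declare a.simps[simp del]

lemma a_odd: "odd n \<Longrightarrow> a n = 0"
  by (subst a.simps) (auto simp: odd_pos)

lemma a_even: "even n \<Longrightarrow> n \<noteq> 0 \<Longrightarrow> a n + (\<Sum>k<n. int (n choose k) * a k) = 0"
  by (subst a.simps) auto

lemma reachK: "x \<in> V \<Longrightarrow> y \<in> V \<Longrightarrow> reach K_edges V x y"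
  unfolding reach_def K_edges_def
  by (cases "x = y") (auto intro: r_into_rtranclp)

lemma oddK: "has_odd_component K_edges V \<longleftrightarrow> (V \<noteq> {} \<and> odd (card V))"
proof -
  have "v \<in> V \<Longrightarrow> component K_edges V v = V" for v
    unfolding component_def using reachK by auto
  then show ?thesis unfolding has_odd_component_def by auto
qed

lemma count_psub:
  fixes g :: "nat \<Rightarrow> 'b::comm_ring_1"
  assumes "finite V"
  shows "(\<Sum>V'\<in>{V'. V' \<subset> V}. g (card V')) = (\<Sum>k<card V. of_nat (card V choose k) * g k)"
proof -
  have fin: "finite {V'. V' \<subset> V}" using assms by (auto intro: finite_subset[of _ "Pow V"])
  have "(\<Sum>V'\<in>{V'. V' \<subset> V}. g (card V')) =
     (\<Sum>k<card V. \<Sum>V'\<in>{x \<in> {V'. V' \<subset> V}. card x = k}. g (card V'))"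
    by (rule sum.group[symmetric]) (use fin assms psubset_card_mono in auto)
  also have "\<dots> = (\<Sum>k<card V. of_nat (card V choose k) * g k)"
  proof (rule sum.cong[OF refl])
    fix k assume k: "k \<in> {..<card V}"
    have e: "{x \<in> {V'. V' \<subset> V}. card x = k} = {B. B \<subseteq> V \<and> card B = k}"
      using k by auto
    show "(\<Sum>V'\<in>{x \<in> {V'. V' \<subset> V}. card x = k}. g (card V')) = of_nat (card V choose k) * g k"
      unfolding e using n_subsets[OF assms, of k] by simp
  qed
  finally show ?thesis .
qed

lemma count_pow:
  fixes g :: "nat \<Rightarrow> 'b::comm_ring_1"
  assumes "finite V"
  shows "(\<Sum>V'\<in>Pow V. g (card V')) = (\<Sum>k\<le>card V. of_nat (card V choose k) * g k)"
proof -
  have fin: "finite (Pow V)" using assms by simp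
  have "(\<Sum>V'\<in>Pow V. g (card V')) =
     (\<Sum>k\<le>card V. \<Sum>V'\<in>{x \<in> Pow V. card x = k}. g (card V'))"
    by (rule sum.group[symmetric]) (use fin assms card_mono in auto)
  also have "\<dots> = (\<Sum>k\<le>card V. of_nat (card V choose k) * g k)"
  proof (rule sum.cong[OF refl])
    fix k
    have e: "{x \<in> Pow V. card x = k} = {B. B \<subseteq> V \<and> card B = k}"
      by auto
    show "(\<Sum>V'\<in>{x \<in> Pow V. card x = k}. g (card V')) = of_nat (card V choose k) * g k"
      unfolding e using n_subsets[OF assms, of k] by simp
  qed
  finally show ?thesis .
qed

lemma saK: "finite V \<Longrightarrow> sa K_edges V = a (card V)"
proof (induction "card V" arbitrary: V rule: less_induct)
  case less
  show ?case
  proof (cases "V = {}")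
    case True then show ?thesis by (simp add: a.simps)
  next
    case ne: False
    then have cpos: "card V \<noteq> 0" using less.prems by simp
    show ?thesis
    proof (cases "odd (card V)")
      case True
      then show ?thesis using ne less.prems oddK[of V] a_odd by simp
    next
      case ev: False
      have "sa K_edges V = - (\<Sum>V'\<in>{V'. V' \<subset> V}. sa K_edges V')"
        using ne less.prems oddK[of V] ev by simp
      also have "(\<Sum>V'\<in>{V'. V' \<subset> V}. sa K_edges V') = (\<Sum>V'\<in>{V'. V' \<subset> V}. a (card V'))"
      proof (rule sum.cong[OF refl])
        fix V' assume "V' \<in> {V'. V' \<subset> V}"
        then have "V' \<subset> V" by simp
        then show "sa K_edges V' = a (card V')"
          using less.hyps[of V'] less.prems psubset_card_mono finite_subset by blast
      qed
      also have "\<dots> = (\<Sum>k<card V. int (card V choose k) * a k)"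
        by (rule count_psub[OF less.prems])
      finally show ?thesis using a_even[of "card V"] ev cpos by simp
    qed
  qed
qed

lemma sa_polyK: "sa_poly K_edges {0..<n} t = (\<Sum>k\<le>n. real (n choose k) * (of_int (a k) * t ^ (n - k)))"
proof -
  have "sa_poly K_edges {0..<n} t = (\<Sum>V'\<in>Pow {0..<n}. (\<lambda>m. of_int (a m) * t ^ (n - m)) (card V'))"
    unfolding sa_poly_def
  proof (rule sum.cong[OF refl])
    fix V' assume "V' \<in> Pow {0..<n}"
    then have s: "V' \<subseteq> {0..<n}" by simp
    then have f: "finite V'" using finite_subset by blast
    have "card ({0..<n} - V') = n - card V'" using card_Diff_subset[OF f s] by simp
    then show "of_int (sa K_edges V') * t ^ card ({0..<n} - V') = (\<lambda>m. of_int (a m) * t ^ (n - m)) (card V')"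
      using saK[OF f] by simp
  qed
  also have "\<dots> = (\<Sum>k\<le>n. real (n choose k) * (of_int (a k) * t ^ (n - k)))"
    using count_pow[of "{0..<n}" "\<lambda>m. of_int (a m) * t ^ (n - m)"] by simp
  finally show ?thesis .
qed

definition A :: "real fps" where "A = Abs_fps (\<lambda>n. of_int (a n) / fact n)"

lemma half_fps: "(f::real fps) / 2 = fps_const (1/2) * f"
proof -
  have u: "(2::real fps) = fps_const 2" by (rule fps_numeral_fps_const)
  have "f / 2 = f * inverse (fps_const 2)" unfolding u by (simp add: fps_divide_unit fps_const_inverse)
  also have "inverse (fps_const (2::real)) = fps_const (1/2)" by (simp add: fps_const_inverse)
  finally show ?thesis by (simp add: mult.commute)
qed
lemma cosh_nth: "fps_nth fps_cosh n = (if even n then 1 / fact n else 0)"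
  unfolding fps_cosh_def by (auto simp: fps_exp_def half_fps)

lemma A_cosh: "A * fps_cosh = 1"
proof (rule fps_ext)
  fix n
  show "fps_nth (A * fps_cosh) n = fps_nth 1 n"
  proof (cases "n = 0")
    case True then show ?thesis by (simp add: fps_mult_nth A_def cosh_nth a.simps)
  next
    case n0: False
    have "fps_nth (A * fps_cosh) n = (\<Sum>i\<le>n. of_int (a i) / fact i * fps_nth fps_cosh (n - i))"
      by (simp add: fps_mult_nth A_def atLeast0AtMost)
    also have "\<dots> = 0"
    proof (cases "even n")
      case False
      have "of_int (a i) / fact i * fps_nth fps_cosh (n - i) = 0" if "i \<in> {..n}" for i
        using False that by (cases "even i") (auto simp: a_odd cosh_nth)
      then show ?thesis by (simp add: sum.neutral)
    next
      case True
      have "(\<Sum>i\<le>n. of_int (a i) / fact i * fps_nth fps_cosh (n - i))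
          = (\<Sum>i\<le>n. of_int (int (n choose i) * a i) / fact n)"
      proof (rule sum.cong[OF refl])
        fix i assume "i \<in> {..n}"
        then have i: "i \<le> n" by simp
        have bf: "real (n choose i) = fact n / (fact i * fact (n - i))"
          using binomial_fact[OF i] by simp
        show "of_int (a i) / fact i * fps_nth fps_cosh (n - i) = of_int (int (n choose i) * a i) / fact n"
        proof (cases "even i")
          case True
          with \<open>even n\<close> i have "even (n - i)" by simp
          then show ?thesis by (simp add: cosh_nth bf field_simps)
        next
          case False
          then show ?thesis by (simp add: a_odd)
        qed
      qed
      also have "\<dots> = of_int (\<Sum>i\<le>n. int (n choose i) * a i) / fact n"
        by (simp add: sum_divide_distrib)
      also have "(\<Sum>i\<le>n. int (n choose i) * a i) = a n + (\<Sum>k<n. int (n choose k) * a k)"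
        by (simp add: lessThan_Suc_atMost[symmetric])
      also have "\<dots> = 0" using a_even[OF True n0] .
      finally show ?thesis by simp
    qed
    finally show ?thesis using n0 by simp
  qed
qed

theorem mainTheorem3:
  fixes t :: real
  shows "Abs_fps (\<lambda>n. sa_poly K_edges {0..<n} t / fact n) = fps_exp t * fps_sech"
proof -
  have c0: "fps_nth fps_cosh 0 \<noteq> 0" by (simp add: cosh_nth)
  have "A = inverse fps_cosh"
    using A_cosh c0 by (metis fps_inverse_unique mult.commute)
  then have s: "fps_sech = A" by (simp add: fps_sech_def)
  show ?thesis unfolding s
  proof (rule fps_ext)
    fix n
    have "fps_nth (fps_exp t * A) n = fps_nth (A * fps_exp t) n" by (simp add: mult.commute)
    also have "\<dots> = (\<Sum>i\<le>n. of_int (a i) / fact i * (t ^ (n - i) / fact (n - i)))"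
      by (simp add: fps_mult_nth A_def atLeast0AtMost)
    also have "\<dots> = (\<Sum>k\<le>n. real (n choose k) * (of_int (a k) * t ^ (n - k))) / fact n"
      unfolding sum_divide_distrib
    proof (rule sum.cong[OF refl])
      fix i assume "i \<in> {..n}"
      then have i: "i \<le> n" by simp
      have bf: "real (n choose i) = fact n / (fact i * fact (n - i))"
        using binomial_fact[OF i] by simp
      show "of_int (a i) / fact i * (t ^ (n - i) / fact (n - i)) = real (n choose i) * (of_int (a i) * t ^ (n - i)) / fact n"
        by (simp add: bf field_simps)
    qed
    finally show "fps_nth (Abs_fps (\<lambda>n. sa_poly K_edges {0..<n} t / fact n)) n = fps_nth (fps_exp t * A) n"
      by (simp add: sa_polyK)
  qed
qed

end
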